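(* For every positive integer $n$, let $\mathrm{PF}_n(321)$ denote the set of parking functions $p=(p_1,\dots,p_n)$ of length $n$ that avoid $321$ as a word, i.e. for which there are no indices $i_1<i_2<i_3$ with $p_{i_1}>p_{i_2}>p_{i_3}$. Let $w_{n,n+1}(321)$ denote the number of words $w_1w_2\cdots w_n$ with all $w_i\in[n+1]$ for which there are no indices $i_1<i_2<i_3$ with $w_{i_1}>w_{i_2}>w_{i_3}$. Then \[|\mathrm{PF}_n(321)| = \frac{1}{n+1}\, w_{n,n+1}(321).\]
   Context: $[n]=\{1,2,\dots,n\}$. A tuple $p=(p_1,\dots,p_n)\in[n]^n$ is a parking function of length $n$ if its weakly increasing rearrangement $(p'_1,\dots,p'_n)$ satisfies $p'_i\le i$ for all $i\in[n]$. *)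

theory Defs
  imports Complex_Main
begin

definition avoids_321 :: "nat list \<Rightarrow> bool" where
  "avoids_321 w \<longleftrightarrow> \<not> (\<exists>i1 i2 i3. i1 < i2 \<and> i2 < i3 \<and> i3 < length w \<and>
      w ! i1 > w ! i2 \<and> w ! i2 > w ! i3)"

(* p in [n]^n whose weakly increasing rearrangement p' satisfies p'_i <= i (1-indexed) *)
definition parking_function :: "nat \<Rightarrow> nat list \<Rightarrow> bool" where
  "parking_function n p \<longleftrightarrow> length p = n \<and> set p \<subseteq> {1..n} \<and>
      (\<forall>i < n. sort p ! i \<le> i + 1)"

definition PF_321 :: "nat \<Rightarrow> nat list set" where
  "PF_321 n = {p. parking_function n p \<and> avoids_321 p}"

definition words_321 :: "nat \<Rightarrow> nat \<Rightarrow> nat list set" where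
  "words_321 n k = {w. length w = n \<and> set w \<subseteq> {1..k} \<and> avoids_321 w}"

end

theory Submission
  imports Defs "HOL-Library.Multiset"
begin
lemma rank_count:
  fixes S :: "nat set"
  assumes "finite S"
  shows "card {p\<in>S. card {q\<in>S. q < p} < s} = min s (card S)"
  using assms
proof (induction S rule: finite_linorder_max_induct)
  case empty then show ?case by simp
next
  case (insert b A)
  have bA: "b \<notin> A" using insert by auto
  have r1: "card {q\<in>insert b A. q < p} = card {q\<in>A. q < p}" if "p \<in> A" for p
  proof -
    have "{q\<in>insert b A. q < p} = {q\<in>A. q < p}" using insert.hyps that by auto
    then show ?thesis by simp
  qed
  have r2: "{q\<in>insert b A. q < b} = A" using insert.hyps by auto
  have eq: "{p\<in>insert b A. card {q\<in>insert b A. q < p} < s}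
      = {p\<in>A. card {q\<in>A. q < p} < s} \<union> (if card A < s then {b} else {})"
  proof (rule set_eqI)
    fix p
    show "p \<in> {p\<in>insert b A. card {q\<in>insert b A. q < p} < s} \<longleftrightarrow>
      p \<in> {p\<in>A. card {q\<in>A. q < p} < s} \<union> (if card A < s then {b} else {})"
    proof (cases "p = b")
      case True
      then show ?thesis using r2 bA by simp
    next
      case False
      then show ?thesis using r1[of p] by auto
    qed
  qed
  have "card {p\<in>insert b A. card {q\<in>insert b A. q < p} < s}
      = card {p\<in>A. card {q\<in>A. q < p} < s} + (if card A < s then 1 else 0)"
    unfolding eq using bA insert.hyps(1) by (subst card_Un_disjoint) auto
  also have "\<dots> = min s (card (insert b A))"
    using insert.IH bA insert.hyps(1) by auto
  finally show ?case .
qed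

lemma rank_downclosed:
  fixes S X :: "nat set"
  assumes fS: "finite S" and XS: "X \<subseteq> S" and dc: "\<forall>p\<in>S. \<forall>q\<in>X. p < q \<longrightarrow> p \<in> X" and pS: "p \<in> S"
  shows "p \<in> X \<longleftrightarrow> card {q\<in>S. q < p} < card X"
proof
  assume pX: "p \<in> X"
  have fX: "finite X" using fS XS finite_subset by blast
  have "{q\<in>S. q<p} \<subseteq> X - {p}" using dc pX by auto
  hence "card {q\<in>S. q<p} \<le> card (X - {p})" using fX by (intro card_mono) auto
  also have "\<dots> < card X" using fX pX by (rule card_Diff1_less)
  finally show "card {q\<in>S. q < p} < card X" .
next
  assume c: "card {q\<in>S. q < p} < card X"
  show "p \<in> X"
  proof (rule ccontr)
    assume pX: "p \<notin> X"
    have "X \<subseteq> {q\<in>S. q<p}"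
    proof
      fix x assume xX: "x \<in> X"
      have "\<not> p < x" using dc pS xX pX by blast
      moreover have "x \<noteq> p" using xX pX by auto
      ultimately show "x \<in> {q\<in>S. q<p}" using xX XS by auto
    qed
    hence "card X \<le> card {q\<in>S. q<p}" using fS by (intro card_mono) auto
    with c show False by simp
  qed
qed

definition flip :: "nat \<Rightarrow> nat set \<Rightarrow> (nat \<Rightarrow> nat) \<Rightarrow> nat \<Rightarrow> nat" where
  "flip a S f p = (if card {q\<in>S. q < p} < card {q\<in>S. f q = Suc a} then a else Suc a)"

lemma flip_cong: "(\<And>q. q \<in> S \<Longrightarrow> f q = g q) \<Longrightarrow> flip a S f p = flip a S g p"
proof -
  assume h: "\<And>q. q \<in> S \<Longrightarrow> f q = g q"
  have "{q\<in>S. f q = Suc a} = {q\<in>S. g q = Suc a}" using h by auto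
  then show ?thesis unfolding flip_def by simp
qed

lemma flip_vals: "flip a S f p = a \<or> flip a S f p = Suc a"
  unfolding flip_def by auto

lemma flip_sorted:
  assumes "finite S" "p \<in> S" "q \<in> S" "p < q" "flip a S f p = Suc a"
  shows "flip a S f q = Suc a"
proof -
  have "{r\<in>S. r < p} \<subseteq> {r\<in>S. r < q}" using assms by auto
  hence "card {r\<in>S. r < p} \<le> card {r\<in>S. r < q}" using assms(1) by (intro card_mono) auto
  then show ?thesis using assms(5) unfolding flip_def by (auto split: if_splits)
qed

lemma flip_count:
  assumes fS: "finite S" and vals: "\<forall>p\<in>S. f p = a \<or> f p = Suc a"
  shows "card {p\<in>S. flip a S f p = a} = card {p\<in>S. f p = Suc a}"
    and "card {p\<in>S. flip a S f p = Suc a} = card {p\<in>S. f p = a}"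
proof -
  let ?k = "card {q\<in>S. f q = Suc a}"
  have kS: "?k \<le> card S" using fS by (intro card_mono) auto
  have e1: "{p\<in>S. flip a S f p = a} = {p\<in>S. card {q\<in>S. q < p} < ?k}"
    unfolding flip_def by auto
  show c1: "card {p\<in>S. flip a S f p = a} = ?k"
    unfolding e1 rank_count[OF fS] using kS by simp
  have e2: "{p\<in>S. flip a S f p = Suc a} = S - {p\<in>S. flip a S f p = a}"
    using flip_vals[of a S f] by auto
  have e3: "{p\<in>S. f p = a} = S - {p\<in>S. f p = Suc a}"
    using vals by auto
  show "card {p\<in>S. flip a S f p = Suc a} = card {p\<in>S. f p = a}"
  proof -
    have "card (S - {p\<in>S. flip a S f p = a}) = card S - card {p\<in>S. flip a S f p = a}"
      using fS by (intro card_Diff_subset) auto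
    moreover have "card (S - {p\<in>S. f p = Suc a}) = card S - card {p\<in>S. f p = Suc a}"
      using fS by (intro card_Diff_subset) auto
    ultimately show ?thesis unfolding e2 e3 using c1 by simp
  qed
qed

lemma flip_invol:
  assumes fS: "finite S" and vals: "\<forall>p\<in>S. f p = a \<or> f p = Suc a"
    and srt: "\<forall>p\<in>S. \<forall>q\<in>S. p < q \<and> f p = Suc a \<longrightarrow> f q = Suc a"
    and pS: "p \<in> S"
  shows "flip a S (flip a S f) p = f p"
proof -
  let ?X = "{q\<in>S. f q = a}"
  have c: "card {q\<in>S. flip a S f q = Suc a} = card ?X" using flip_count(2)[OF fS vals] .
  have dc: "\<forall>p\<in>S. \<forall>q\<in>?X. p < q \<longrightarrow> p \<in> ?X"
    using srt vals by fastforce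
  have "p \<in> ?X \<longleftrightarrow> card {q\<in>S. q < p} < card ?X"
    using rank_downclosed[OF fS _ dc pS] by auto
  then show ?thesis unfolding flip_def[of a S "flip a S f"] c using vals pS by auto
qed

definition isc :: "nat \<Rightarrow> nat \<Rightarrow> bool" where
  "isc a x \<longleftrightarrow> x = a \<or> x = Suc a"

definition tau :: "nat \<Rightarrow> nat \<Rightarrow> nat" where
  "tau a x = (if x = a then Suc a else if x = Suc a then a else x)"

definition inA :: "nat \<Rightarrow> nat list \<Rightarrow> nat \<Rightarrow> bool" where
  "inA a w p \<longleftrightarrow> p < length w \<and> isc a (w!p) \<and> (\<exists>q. p < q \<and> q < length w \<and> w!q < a)"

definition inB :: "nat \<Rightarrow> nat list \<Rightarrow> nat \<Rightarrow> bool" where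
  "inB a w p \<longleftrightarrow> p < length w \<and> isc a (w!p) \<and> (\<exists>q<p. w!q > Suc a) \<and> \<not> inA a w p"

definition newv :: "nat \<Rightarrow> nat list \<Rightarrow> nat \<Rightarrow> nat" where
  "newv a w p = (if \<not> isc a (w!p) then w!p
     else if inA a w p then flip a {q. inA a w q} ((!) w) p
     else if inB a w p then flip a {q. inB a w q} ((!) w) p
     else tau a (w!p))"

definition phi :: "nat \<Rightarrow> nat list \<Rightarrow> nat list" where
  "phi a w = map (newv a w) [0..<length w]"

lemma phi_length[simp]: "length (phi a w) = length w"
  unfolding phi_def by simp

lemma phi_nth: "p < length w \<Longrightarrow> phi a w ! p = newv a w p"
  unfolding phi_def by simp

lemma newv_isc: "isc a (newv a w p) \<longleftrightarrow> isc a (w!p)"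
  unfolding newv_def using flip_vals by (auto simp: isc_def tau_def)

lemma newv_nonisc: "\<not> isc a (w!p) \<Longrightarrow> newv a w p = w!p"
  unfolding newv_def by simp

lemma newv_lt: "newv a w p < a \<longleftrightarrow> w!p < a"
  using newv_isc[of a w p] newv_nonisc[of a w p] by (cases "isc a (w!p)") (auto simp: isc_def)

lemma newv_gt: "newv a w p > Suc a \<longleftrightarrow> w!p > Suc a"
  using newv_isc[of a w p] newv_nonisc[of a w p] by (cases "isc a (w!p)") (auto simp: isc_def)

lemma inA_phi: "inA a (phi a w) p \<longleftrightarrow> inA a w p"
  unfolding inA_def by (auto simp: phi_nth newv_isc newv_lt)

lemma inB_phi: "inB a (phi a w) p \<longleftrightarrow> inB a w p"
  unfolding inB_def inA_phi by (auto simp: phi_nth newv_isc newv_gt)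

lemma finite_inA: "finite {q. inA a w q}"
  by (rule finite_subset[of _ "{..<length w}"]) (auto simp: inA_def)

lemma finite_inB: "finite {q. inB a w q}"
  by (rule finite_subset[of _ "{..<length w}"]) (auto simp: inB_def)

lemma vals_A: "\<forall>p\<in>{q. inA a w q}. w!p = a \<or> w!p = Suc a"
  by (auto simp: inA_def isc_def)

lemma vals_B: "\<forall>p\<in>{q. inB a w q}. w!p = a \<or> w!p = Suc a"
  by (auto simp: inB_def isc_def)

lemma avoidsD:
  assumes "avoids_321 w" "i1 < i2" "i2 < i3" "i3 < length w" "w!i1 > w!i2" "w!i2 > w!i3"
  shows False
  using assms unfolding avoids_321_def by blast

lemma sorted_A:
  assumes av: "avoids_321 w"
  shows "\<forall>p\<in>{q. inA a w q}. \<forall>q\<in>{q. inA a w q}. p < q \<and> w!p = Suc a \<longrightarrow> w!q = Suc a"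
proof (intro ballI impI)
  fix p q assume p: "p \<in> {q. inA a w q}" and q: "q \<in> {q. inA a w q}" and h: "p < q \<and> w!p = Suc a"
  show "w!q = Suc a"
  proof (rule ccontr)
    assume "w!q \<noteq> Suc a"
    hence wq: "w!q = a" using q by (auto simp: inA_def isc_def)
    obtain r where r: "q < r" "r < length w" "w!r < a" using q by (auto simp: inA_def)
    show False using avoidsD[OF av, of p q r] h wq r by auto
  qed
qed

lemma sorted_B:
  assumes av: "avoids_321 w"
  shows "\<forall>p\<in>{q. inB a w q}. \<forall>q\<in>{q. inB a w q}. p < q \<and> w!p = Suc a \<longrightarrow> w!q = Suc a"
proof (intro ballI impI)
  fix p q assume p: "p \<in> {q. inB a w q}" and q: "q \<in> {q. inB a w q}" and h: "p < q \<and> w!p = Suc a"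
  show "w!q = Suc a"
  proof (rule ccontr)
    assume "w!q \<noteq> Suc a"
    hence wq: "w!q = a" using q by (auto simp: inB_def isc_def)
    obtain r where r: "r < p" "w!r > Suc a" using p by (auto simp: inB_def)
    have "q < length w" using q by (auto simp: inB_def)
    then show False using avoidsD[OF av, of r p q] h wq r by auto
  qed
qed

lemma phi_invol:
  assumes av: "avoids_321 w"
  shows "phi a (phi a w) = w"
proof (rule nth_equalityI)
  show "length (phi a (phi a w)) = length w" by simp
next
  fix p assume "p < length (phi a (phi a w))"
  hence p: "p < length w" by simp
  let ?v = "phi a w"
  have vA: "{q. inA a ?v q} = {q. inA a w q}" using inA_phi by blast
  have vB: "{q. inB a ?v q} = {q. inB a w q}" using inB_phi by blast
  have "phi a ?v ! p = newv a ?v p" using p by (simp add: phi_nth)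
  also have "\<dots> = w!p"
  proof (cases "isc a (w!p)")
    case False
    then show ?thesis using p by (simp add: newv_nonisc phi_nth newv_isc)
  next
    case iscp: True
    show ?thesis
    proof (cases "inA a w p")
      case True
      have iv: "isc a (?v!p)" using iscp p by (simp add: phi_nth newv_isc)
      have "newv a ?v p = flip a {q. inA a ?v q} ((!) ?v) p"
        using iv True inA_phi[of a w p] by (simp add: newv_def)
      also have "\<dots> = flip a {q. inA a w q} ((!) ?v) p" using vA by simp
      also have "\<dots> = flip a {q. inA a w q} (flip a {q. inA a w q} ((!) w)) p"
      proof (rule flip_cong)
        fix q assume q: "q \<in> {q. inA a w q}"
        then have "q < length w" "isc a (w!q)" "inA a w q" by (auto simp: inA_def)
        then show "?v ! q = flip a {q. inA a w q} ((!) w) q" by (simp add: phi_nth newv_def)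
      qed
      also have "\<dots> = w!p"
        using flip_invol[OF finite_inA vals_A sorted_A[OF av]] True by auto
      finally show ?thesis .
    next
      case nA: False
      show ?thesis
      proof (cases "inB a w p")
        case True
        have iv: "isc a (?v!p)" using iscp p by (simp add: phi_nth newv_isc)
        have "newv a ?v p = flip a {q. inB a ?v q} ((!) ?v) p"
          using iv nA True inA_phi[of a w p] inB_phi[of a w p] by (simp add: newv_def)
        also have "\<dots> = flip a {q. inB a w q} ((!) ?v) p" using vB by simp
        also have "\<dots> = flip a {q. inB a w q} (flip a {q. inB a w q} ((!) w)) p"
        proof (rule flip_cong)
          fix q assume q: "q \<in> {q. inB a w q}"
          then have "q < length w" "isc a (w!q)" "\<not> inA a w q" "inB a w q" by (auto simp: inB_def)
          then show "?v ! q = flip a {q. inB a w q} ((!) w) q" by (simp add: phi_nth newv_def)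
        qed
        also have "\<dots> = w!p"
          using flip_invol[OF finite_inB vals_B sorted_B[OF av]] True by auto
        finally show ?thesis .
      next
        case False
        then show ?thesis using iscp nA p
          by (auto simp: newv_def phi_nth newv_isc inA_phi inB_phi tau_def isc_def)
      qed
    qed
  qed
  finally show "phi a ?v ! p = w ! p" .
qed

lemma cmp_lemma:
  assumes "isc a x' \<longleftrightarrow> isc a x" "\<not> isc a x \<Longrightarrow> x' = x" "isc a y' \<longleftrightarrow> isc a y" "\<not> isc a y \<Longrightarrow> y' = y"
    "\<not> (isc a x \<and> isc a y)" "x' > y'"
  shows "x > y"
  using assms unfolding isc_def by (cases "x = a \<or> x = Suc a"; cases "y = a \<or> y = Suc a") auto

lemma phi_avoids:
  assumes av: "avoids_321 w"
  shows "avoids_321 (phi a w)"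
  unfolding avoids_321_def
proof
  let ?v = "phi a w"
  assume "\<exists>i1 i2 i3. i1 < i2 \<and> i2 < i3 \<and> i3 < length ?v \<and> ?v!i1 > ?v!i2 \<and> ?v!i2 > ?v!i3"
  then obtain i j l where ij: "i<j" "j<l" "l < length w" "?v!i > ?v!j" "?v!j > ?v!l" by auto
  have jl: "i < length w" "j < length w" using ij by auto
  have vi: "?v!i = newv a w i" "?v!j = newv a w j" "?v!l = newv a w l" using ij jl by (auto simp: phi_nth)
  have ci: "isc a (?v!i) \<longleftrightarrow> isc a (w!i)" "isc a (?v!j) \<longleftrightarrow> isc a (w!j)" "isc a (?v!l) \<longleftrightarrow> isc a (w!l)"
    using vi newv_isc by auto
  have ni: "\<not> isc a (w!i) \<Longrightarrow> ?v!i = w!i" "\<not> isc a (w!j) \<Longrightarrow> ?v!j = w!j" "\<not> isc a (w!l) \<Longrightarrow> ?v!l = w!l"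
    using vi newv_nonisc by auto
  consider (IJ) "isc a (w!i)" "isc a (w!j)" | (JL) "isc a (w!j)" "isc a (w!l)"
    | (IL) "isc a (w!i)" "isc a (w!l)" "\<not>isc a (w!j)"
    | (N) "\<not>(isc a (w!i) \<and> isc a (w!j))" "\<not>(isc a (w!j) \<and> isc a (w!l))" by blast
  then show False
  proof cases
    case N
    have "w!i > w!j" by (rule cmp_lemma[OF ci(1) ni(1) ci(2) ni(2) N(1) ij(4)])
    moreover have "w!j > w!l" by (rule cmp_lemma[OF ci(2) ni(2) ci(3) ni(3) N(2) ij(5)])
    ultimately show False using avoidsD[OF av ij(1) ij(2) ij(3)] by auto
  next
    case IL
    then have "isc a (?v!i)" "isc a (?v!l)" using ci by auto
    then show False using ij unfolding isc_def by auto
  next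
    case IJ
    then have "isc a (?v!i)" "isc a (?v!j)" using ci by auto
    then have e: "?v!i = Suc a" "?v!j = a" using ij unfolding isc_def by auto
    then have "?v!l < a" using ij by auto
    then have nl: "\<not> isc a (w!l)" using ci unfolding isc_def by auto
    then have wl: "w!l < a" using ni(3) \<open>?v!l < a\<close> by auto
    have il: "i < l" using ij by simp
    have Ai: "inA a w i" using IJ ij(3) jl wl il unfolding inA_def by blast
    have Aj: "inA a w j" using IJ ij jl wl unfolding inA_def by auto
    have fi: "flip a {q. inA a w q} ((!) w) i = Suc a" using e vi IJ Ai by (simp add: newv_def)
    have fj: "flip a {q. inA a w q} ((!) w) j = a" using e vi IJ Aj by (simp add: newv_def)
    show False using flip_sorted[OF finite_inA _ _ ij(1) fi] Ai Aj fj by auto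
  next
    case JL
    then have "isc a (?v!j)" "isc a (?v!l)" using ci by auto
    then have e: "?v!j = Suc a" "?v!l = a" using ij unfolding isc_def by auto
    then have "?v!i > Suc a" using ij by auto
    then have nI: "\<not> isc a (w!i)" using ci unfolding isc_def by auto
    then have wi: "w!i > Suc a" using ni(1) \<open>?v!i > Suc a\<close> by auto
    have nAj: "\<not> inA a w j"
    proof
      assume "inA a w j"
      then obtain r where r: "j < r" "r < length w" "w!r < a" unfolding inA_def by auto
      have "w!i > w!j" "w!j > w!r" using wi JL r unfolding isc_def by auto
      then show False using avoidsD[OF av ij(1) r(1) r(2)] by auto
    qed
    have nAl: "\<not> inA a w l"
    proof
      assume "inA a w l"
      then obtain r where r: "l < r" "r < length w" "w!r < a" unfolding inA_def by auto
      have "w!i > w!l" "w!l > w!r" using wi JL r unfolding isc_def by auto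
      have il: "i < l" using ij by simp
      then show False using avoidsD[OF av il r(1) r(2)] \<open>w!i > w!l\<close> \<open>w!l > w!r\<close> by auto
    qed
    have il: "i < l" using ij by simp
    have Bj: "inB a w j" using JL ij jl wi nAj unfolding inB_def by blast
    have Bl: "inB a w l" using JL ij(3) il wi nAl unfolding inB_def by blast
    have fj: "flip a {q. inB a w q} ((!) w) j = Suc a" using e vi JL Bj nAj by (simp add: newv_def)
    have fl: "flip a {q. inB a w q} ((!) w) l = a" using e vi JL Bl nAl by (simp add: newv_def)
    show False using flip_sorted[OF finite_inB _ _ ij(2) fj] Bj Bl fl by auto
  qed
qed

lemma count_card: "count (mset xs) y = card {i. i < length xs \<and> xs!i = y}"
proof -
  have "count (mset xs) y = length (filter ((=) y) xs)"
    by (simp add: count_mset count_list_eq_length_filter)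
  also have "\<dots> = card {i. i < length xs \<and> y = xs!i}" by (rule length_filter_conv_card)
  also have "{i. i < length xs \<and> y = xs!i} = {i. i < length xs \<and> xs!i = y}" by auto
  finally show ?thesis .
qed

lemma card_Un2:
  assumes "finite A" "finite B" "A \<inter> B = {}"
  shows "card {i\<in>A \<union> B. P i} = card {i\<in>A. P i} + card {i\<in>B. P i}"
proof -
  have "{i\<in>A \<union> B. P i} = {i\<in>A. P i} \<union> {i\<in>B. P i}" by auto
  then show ?thesis using assms by (simp add: card_Un_disjoint disjoint_iff)
qed

lemma tau_tau[simp]: "tau a (tau a x) = x"
  unfolding tau_def by auto

lemma tau_eq: "tau a x = y \<longleftrightarrow> x = tau a y"
  unfolding tau_def by auto

lemma phi_A: "inA a w i \<Longrightarrow> phi a w ! i = flip a {q. inA a w q} ((!) w) i"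
proof -
  assume h: "inA a w i"
  have "i < length w" "isc a (w!i)" using h by (auto simp: inA_def)
  then show ?thesis using h by (simp add: phi_nth newv_def)
qed

lemma phi_B: "inB a w i \<Longrightarrow> phi a w ! i = flip a {q. inB a w q} ((!) w) i"
proof -
  assume h: "inB a w i"
  have "i < length w" "isc a (w!i)" "\<not> inA a w i" using h by (auto simp: inB_def)
  then show ?thesis using h by (simp add: phi_nth newv_def)
qed

lemma phi_M: "i < length w \<Longrightarrow> isc a (w!i) \<Longrightarrow> \<not> inA a w i \<Longrightarrow> \<not> inB a w i \<Longrightarrow> phi a w ! i = tau a (w!i)"
  by (simp add: phi_nth newv_def)

lemma phi_mset:
  assumes av: "avoids_321 w"
  shows "mset (phi a w) = mset (map (tau a) w)"
proof (rule multiset_eqI)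
  fix y
  let ?v = "phi a w"
  let ?A = "{i. inA a w i}" and ?B = "{i. inB a w i}"
  let ?M = "{i. i < length w \<and> isc a (w!i) \<and> \<not> inA a w i \<and> \<not> inB a w i}"
  have "card {i. i < length w \<and> ?v!i = y} = card {i. i < length w \<and> tau a (w!i) = y}"
  proof (cases "isc a y")
    case False
    have "{i. i < length w \<and> ?v!i = y} = {i. i < length w \<and> tau a (w!i) = y}"
    proof (intro Collect_cong conj_cong refl)
      fix i assume i: "i < length w"
      show "?v!i = y \<longleftrightarrow> tau a (w!i) = y"
      proof (cases "isc a (w!i)")
        case True
        then have "isc a (?v!i)" "isc a (tau a (w!i))" using i newv_isc[of a w i]
          by (auto simp: phi_nth isc_def tau_def)
        then show ?thesis using False by auto
      next
        case c: False
        then have "tau a (w!i) = w!i" by (auto simp: isc_def tau_def)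
        then show ?thesis using c i by (simp add: phi_nth newv_nonisc)
      qed
    qed
    then show ?thesis by simp
  next
    case True
    have U: "{i. i < length w \<and> ?v!i = y} = {i \<in> ?A \<union> ?B \<union> ?M. ?v!i = y}"
    proof -
      have "i < length w \<and> ?v!i = y \<longleftrightarrow> i \<in> ?A \<union> ?B \<union> ?M \<and> ?v!i = y" for i
        using True newv_isc[of a w i] by (auto simp: phi_nth inA_def inB_def)
      then show ?thesis by blast
    qed
    have U2: "{i. i < length w \<and> tau a (w!i) = y} = {i \<in> ?A \<union> ?B \<union> ?M. tau a (w!i) = y}"
    proof -
      have "isc a (tau a x) \<longleftrightarrow> isc a x" for x by (auto simp: isc_def tau_def)
      then have "i < length w \<and> tau a (w!i) = y \<longleftrightarrow> i \<in> ?A \<union> ?B \<union> ?M \<and> tau a (w!i) = y" for i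
        using True by (auto simp: inA_def inB_def)
      then show ?thesis by blast
    qed
    have fA: "finite ?A" by (rule finite_inA)
    have fB: "finite ?B" by (rule finite_inB)
    have fM: "finite ?M" by (rule finite_subset[of _ "{..<length w}"]) auto
    have dAB: "?A \<inter> ?B = {}" by (auto simp: inB_def)
    have dABM: "(?A \<union> ?B) \<inter> ?M = {}" by auto
    have cA: "card {i\<in>?A. ?v!i = y} = card {i\<in>?A. tau a (w!i) = y}"
    proof -
      have "{i\<in>?A. ?v!i = y} = {i\<in>?A. flip a ?A ((!) w) i = y}"
        by (auto simp: phi_A)
      moreover have "{i\<in>?A. tau a (w!i) = y} = {i\<in>?A. w!i = tau a y}" by (auto simp: tau_eq)
      moreover have "card {i\<in>?A. flip a ?A ((!) w) i = y} = card {i\<in>?A. w!i = tau a y}"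
        using True flip_count[OF fA vals_A] by (auto simp: isc_def tau_def)
      ultimately show ?thesis by simp
    qed
    have cB: "card {i\<in>?B. ?v!i = y} = card {i\<in>?B. tau a (w!i) = y}"
    proof -
      have "{i\<in>?B. ?v!i = y} = {i\<in>?B. flip a ?B ((!) w) i = y}"
        by (auto simp: phi_B)
      moreover have "{i\<in>?B. tau a (w!i) = y} = {i\<in>?B. w!i = tau a y}" by (auto simp: tau_eq)
      moreover have "card {i\<in>?B. flip a ?B ((!) w) i = y} = card {i\<in>?B. w!i = tau a y}"
        using True flip_count[OF fB vals_B] by (auto simp: isc_def tau_def)
      ultimately show ?thesis by simp
    qed
    have cM: "{i\<in>?M. ?v!i = y} = {i\<in>?M. tau a (w!i) = y}"
      by (auto simp: phi_M)
    have s1: "card {i \<in> ?A \<union> ?B \<union> ?M. P i} = card {i\<in>?A \<union> ?B. P i} + card {i\<in>?M. P i}" for P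
      by (rule card_Un2) (use fA fB fM dABM in auto)
    have s2: "card {i \<in> ?A \<union> ?B. P i} = card {i\<in>?A. P i} + card {i\<in>?B. P i}" for P
      by (rule card_Un2) (use fA fB dAB in auto)
    show ?thesis
      by (simp only: U U2 s1 s2 cA cB cM)
  qed
  moreover have "{i. i < length (map (tau a) w) \<and> map (tau a) w ! i = y} = {i. i < length w \<and> tau a (w!i) = y}"
    by auto
  ultimately show "count (mset ?v) y = count (mset (map (tau a) w)) y"
    by (simp only: count_card phi_length)
qed

lemma tau_range: "1 \<le> a \<Longrightarrow> Suc a \<le> k \<Longrightarrow> x \<in> {1..k} \<Longrightarrow> tau a x \<in> {1..k}"
  unfolding tau_def by auto

lemma phi_W:
  assumes "1 \<le> a" "Suc a \<le> k" "w \<in> words_321 n k"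
  shows "phi a w \<in> words_321 n k"
proof -
  have av: "avoids_321 w" and len: "length w = n" and st: "set w \<subseteq> {1..k}"
    using assms(3) by (auto simp: words_321_def)
  have "set (phi a w) = set (map (tau a) w)" using mset_eq_setD[OF phi_mset[OF av]] .
  also have "\<dots> \<subseteq> {1..k}" using st tau_range[OF assms(1,2)] by auto
  finally show ?thesis using phi_avoids[OF av] len by (simp add: words_321_def)
qed

fun R :: "nat \<Rightarrow> nat list \<Rightarrow> nat list" where
  "R 0 w = w"
| "R (Suc m) w = R m (phi (Suc m) w)"

definition T :: "nat \<Rightarrow> nat \<Rightarrow> nat" where
  "T m x = (if x = Suc m then 1 else if 1 \<le> x \<and> x \<le> m then x + 1 else x)"

lemma R_W: "m < k \<Longrightarrow> w \<in> words_321 n k \<Longrightarrow> R m w \<in> words_321 n k"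
proof (induction m arbitrary: w)
  case 0 then show ?case by simp
next
  case (Suc m)
  have "phi (Suc m) w \<in> words_321 n k" using Suc.prems by (intro phi_W) auto
  then show ?case using Suc by simp
qed

lemma T_tau: "T m (tau (Suc m) x) = T (Suc m) x"
  unfolding T_def tau_def by auto

lemma R_mset: "m < k \<Longrightarrow> w \<in> words_321 n k \<Longrightarrow> mset (R m w) = mset (map (T m) w)"
proof (induction m arbitrary: w)
  case 0
  have "map (T 0) w = w" by (rule map_idI) (auto simp: T_def)
  then show ?case by simp
next
  case (Suc m)
  have pw: "phi (Suc m) w \<in> words_321 n k" using Suc.prems by (intro phi_W) auto
  have av: "avoids_321 w" using Suc.prems by (simp add: words_321_def)
  have "mset (R (Suc m) w) = mset (map (T m) (phi (Suc m) w))" using Suc.IH[OF _ pw] Suc.prems by simp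
  also have "\<dots> = mset (map (T m) (map (tau (Suc m)) w))"
    using phi_mset[OF av, of "Suc m"] by (simp add: mset_map multiset.map_comp)
  also have "map (T m) (map (tau (Suc m)) w) = map (T (Suc m)) w" by (simp add: T_tau)
  finally show ?case .
qed

lemma R_inj: "m < k \<Longrightarrow> inj_on (R m) (words_321 n k)"
proof (induction m)
  case 0 then show ?case by (simp add: inj_on_def)
next
  case (Suc m)
  show ?case
  proof (rule inj_onI)
    fix x y assume x: "x \<in> words_321 n k" and y: "y \<in> words_321 n k" and e: "R (Suc m) x = R (Suc m) y"
    have px: "phi (Suc m) x \<in> words_321 n k" using Suc.prems x by (intro phi_W) auto
    have py: "phi (Suc m) y \<in> words_321 n k" using Suc.prems y by (intro phi_W) auto
    have "phi (Suc m) x = phi (Suc m) y" using Suc.IH Suc.prems px py e by (simp add: inj_on_def)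
    then have "phi (Suc m) (phi (Suc m) x) = phi (Suc m) (phi (Suc m) y)" by simp
    then show "x = y" using x y phi_invol by (simp add: words_321_def)
  qed
qed

definition sh :: "nat \<Rightarrow> nat \<Rightarrow> nat \<Rightarrow> nat" where
  "sh N j x = (x - 1 + j) mod N + 1"

lemma sh_range: "0 < N \<Longrightarrow> sh N j x \<in> {1..N}"
  unfolding sh_def by (simp add: Suc_leI)

lemma sh_sh: "1 \<le> x \<Longrightarrow> sh N a (sh N b x) = sh N (a + b) x"
proof -
  assume "1 \<le> x"
  then obtain y where y: "x = Suc y" by (cases x) auto
  have "sh N a (sh N b x) = ((y + b) mod N + a) mod N + 1" unfolding sh_def y by simp
  also have "\<dots> = (y + b + a) mod N + 1" by (simp add: mod_add_left_eq)
  also have "\<dots> = sh N (a + b) x" unfolding sh_def y by (simp add: ac_simps)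
  finally show ?thesis .
qed

lemma sh_mod: "sh N j x = sh N (j mod N) x"
  unfolding sh_def by (simp add: mod_add_right_eq)

lemma sh_0: "x \<in> {1..N} \<Longrightarrow> sh N 0 x = x"
  unfolding sh_def by auto

lemma T_sh: "x \<in> {1..Suc n} \<Longrightarrow> T n x = sh (Suc n) 1 x"
  unfolding T_def sh_def by auto

lemma rho_W: "0 < n \<Longrightarrow> w \<in> words_321 n (Suc n) \<Longrightarrow> (R n ^^ j) w \<in> words_321 n (Suc n)"
  by (induction j) (auto intro: R_W)

lemma rho_mset:
  assumes "0 < n" "w \<in> words_321 n (Suc n)"
  shows "mset ((R n ^^ j) w) = mset (map (sh (Suc n) j) w)"
proof (induction j)
  case 0
  have "map (sh (Suc n) 0) w = w" using assms(2) by (intro map_idI) (auto simp: sh_0 words_321_def)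
  then show ?case by simp
next
  case (Suc j)
  let ?u = "(R n ^^ j) w"
  have u: "?u \<in> words_321 n (Suc n)" using rho_W assms by blast
  have st: "set ?u \<subseteq> {1..Suc n}" using u by (simp add: words_321_def)
  have "mset ((R n ^^ Suc j) w) = mset (R n ?u)" by simp
  also have "\<dots> = mset (map (T n) ?u)" using R_mset[OF _ u] by simp
  also have "map (T n) ?u = map (sh (Suc n) 1) ?u" using st by (intro map_cong refl) (auto simp: T_sh)
  also have "mset (map (sh (Suc n) 1) ?u) = mset (map (sh (Suc n) 1) (map (sh (Suc n) j) w))"
    using Suc.IH by (simp add: mset_map multiset.map_comp)
  also have "map (sh (Suc n) 1) (map (sh (Suc n) j) w) = map (sh (Suc n) (Suc j)) w"
    using assms(2) by (auto simp: words_321_def sh_sh)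
  finally show ?case .
qed

lemma filt_len_mset: "mset xs = mset ys \<Longrightarrow> length (filter P xs) = length (filter P ys)"
  by (metis mset_filter size_mset)

lemma filt_mono: "(\<forall>x\<in>set xs. P x \<longrightarrow> Q x) \<Longrightarrow> length (filter P xs) \<le> length (filter Q xs)"
  by (induction xs) auto

lemma filt_or: "(\<forall>x. \<not> (P x \<and> Q x)) \<Longrightarrow> length (filter (\<lambda>x. P x \<or> Q x) xs) = length (filter P xs) + length (filter Q xs)"
  by (induction xs) auto

lemma pf_mset:
  assumes "mset p = mset q"
  shows "parking_function n p \<longleftrightarrow> parking_function n q"
proof -
  have "length p = length q" using assms by (metis size_mset)
  moreover have "set p = set q" using assms by (rule mset_eq_setD)
  moreover have "sort q = sort p" using assms by (intro properties_for_sort) auto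
  ultimately show ?thesis unfolding parking_function_def by simp
qed

lemma pf_count:
  assumes len: "length p = n" and st: "set p \<subseteq> {1..Suc n}"
  shows "parking_function n p \<longleftrightarrow> (\<forall>i\<in>{1..n}. i \<le> length (filter (\<lambda>x. x \<le> i) p))"
proof -
  let ?s = "sort p"
  have ls: "length ?s = n" using len by simp
  have srt: "sorted ?s" by simp
  have fl: "length (filter (\<lambda>x. x \<le> i) p) = card {k. k < n \<and> ?s!k \<le> i}" for i
  proof -
    have "length (filter (\<lambda>x. x \<le> i) p) = length (filter (\<lambda>x. x \<le> i) ?s)"
      by (rule filt_len_mset) simp
    also have "\<dots> = card {k. k < n \<and> ?s!k \<le> i}" using ls by (simp add: length_filter_conv_card)
    finally show ?thesis .
  qed
  show ?thesis
  proof
    assume pf: "parking_function n p"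
    show "\<forall>i\<in>{1..n}. i \<le> length (filter (\<lambda>x. x \<le> i) p)"
    proof
      fix i assume i: "i \<in> {1..n}"
      have "{..<i} \<subseteq> {k. k < n \<and> ?s!k \<le> i}"
      proof
        fix k assume "k \<in> {..<i}"
        then have "k < n" "?s!k \<le> k + 1" "k + 1 \<le> i" using i pf unfolding parking_function_def by auto
        then show "k \<in> {k. k < n \<and> ?s!k \<le> i}" by simp
      qed
      then have "card {..<i} \<le> card {k. k < n \<and> ?s!k \<le> i}" by (intro card_mono) auto
      then show "i \<le> length (filter (\<lambda>x. x \<le> i) p)" using fl by simp
    qed
  next
    assume c: "\<forall>i\<in>{1..n}. i \<le> length (filter (\<lambda>x. x \<le> i) p)"
    have st2: "set p \<subseteq> {1..n}"
    proof
      fix x assume x: "x \<in> set p"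
      show "x \<in> {1..n}"
      proof (rule ccontr)
        assume "x \<notin> {1..n}"
        then have "\<not> x \<le> n" using x st by auto
        then have "length (filter (\<lambda>x. x \<le> n) p) < length p" using x by (intro length_filter_less)
        moreover have "n \<ge> 1" using x len by (cases p) auto
        then have "n \<le> length (filter (\<lambda>x. x \<le> n) p)" using c by auto
        ultimately show False using len by simp
      qed
    qed
    have "\<forall>k<n. ?s!k \<le> k + 1"
    proof (intro allI impI)
      fix k assume k: "k < n"
      show "?s!k \<le> k + 1"
      proof (rule ccontr)
        assume "\<not> ?s!k \<le> k + 1"
        then have "{m. m < n \<and> ?s!m \<le> k + 1} \<subseteq> {..<k}"
          using sorted_nth_mono[OF srt, of k] ls by (auto simp: not_less) (meson le_trans not_less)
        then have "card {m. m < n \<and> ?s!m \<le> k + 1} \<le> k" using card_mono[of "{..<k}"] by fastforce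
        moreover have "k + 1 \<le> card {m. m < n \<and> ?s!m \<le> k + 1}"
        proof -
          have "k + 1 \<in> {1..n}" using k by simp
          then have "k + 1 \<le> length (filter (\<lambda>x. x \<le> k + 1) p)" using c by blast
          then show ?thesis using fl[of "k+1"] by simp
        qed
        ultimately show False by simp
      qed
    qed
    then show "parking_function n p" using len st2 unfolding parking_function_def by auto
  qed
qed

lemma pf_shift_unique:
  assumes pf: "parking_function n p" and pf2: "parking_function n (map (sh (Suc n) d) p)"
    and d: "0 < d" "d < Suc n"
  shows False
proof -
  let ?N = "Suc n"
  define m where "m = ?N - d"
  have m: "1 \<le> m" "m \<le> n" "m + d = ?N" using d unfolding m_def by auto
  have len: "length p = n" and st: "set p \<subseteq> {1..n}" using pf unfolding parking_function_def by auto
  have st1: "set p \<subseteq> {1..Suc n}" using st by auto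
  have stq: "set (map (sh ?N d) p) \<subseteq> {1..Suc n}" using sh_range[of ?N] by auto
  have c1: "m \<le> length (filter (\<lambda>x. x \<le> m) p)" using pf_count[OF len st1] pf m by auto
  have "d \<le> length (filter (\<lambda>x. x \<le> d) (map (sh ?N d) p))"
    using pf_count[of "map (sh ?N d) p" n] len stq pf2 d by auto
  also have "\<dots> = length (filter (\<lambda>x. sh ?N d x \<le> d) p)" by (simp add: length_filter_map comp_def)
  also have "\<dots> \<le> length (filter (\<lambda>x. \<not> x \<le> m) p)"
  proof (rule filt_mono, intro ballI impI)
    fix x assume x: "x \<in> set p" and h: "sh ?N d x \<le> d"
    show "\<not> x \<le> m"
    proof
      assume "x \<le> m"
      then have "x - 1 + d < ?N" using m x st by auto
      then have "sh ?N d x = x + d" unfolding sh_def using x st by auto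
      then show False using h x st by auto
    qed
  qed
  finally have c2: "d \<le> length (filter (\<lambda>x. \<not> x \<le> m) p)" .
  have "length (filter (\<lambda>x. x \<le> m) p) + length (filter (\<lambda>x. \<not> x \<le> m) p) = n"
    using sum_length_filter_compl len by metis
  then show False using c1 c2 m by simp
qed

lemma sh_explicit:
  assumes "1 \<le> x" "x \<le> N" "1 \<le> a" "a \<le> N"
  shows "sh N (N - a) x = (if a < x then x - a else x + N - a)"
proof (cases "a < x")
  case True
  have e: "x - 1 + (N - a) = (x - 1 - a) + N" using True assms by auto
  have lt: "x - 1 - a < N" using assms by auto
  have "(x - 1 + (N - a)) mod N = x - 1 - a" unfolding e using lt by simp
  then show ?thesis unfolding sh_def using True by simp
next
  case False
  have "x - 1 + (N - a) < N" using False assms by auto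
  then show ?thesis unfolding sh_def using False assms by simp
qed

lemma pf_shift_exists:
  assumes len: "length w = n" and st: "set w \<subseteq> {1..Suc n}"
  shows "\<exists>d<Suc n. parking_function n (map (sh (Suc n) d) w)"
proof -
  let ?N = "Suc n"
  define G where "G m = length (filter (\<lambda>x. x \<le> m) w)" for m
  define g where "g m = int (G m) - int m" for m
  define gm where "gm = Min (g ` {1..?N})"
  have gm_le: "gm \<le> g b" if "b \<in> {1..?N}" for b unfolding gm_def using that by simp
  have "gm \<in> g ` {1..?N}" unfolding gm_def by (intro Min_in) auto
  then obtain a0 where a0: "a0 \<in> {1..?N}" "g a0 = gm" by auto
  define a where "a = (LEAST a. a \<in> {1..?N} \<and> g a = gm)"
  have aP: "a \<in> {1..?N} \<and> g a = gm" unfolding a_def by (rule LeastI[of _ a0]) (use a0 in auto)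
  have amin: "g a \<le> g b" if "b \<in> {1..?N}" for b using aP gm_le that by auto
  have astrict: "g a < g b" if "1 \<le> b" "b < a" for b
  proof (rule ccontr)
    assume "\<not> g a < g b"
    then have "b \<in> {1..?N} \<and> g b = gm" using that aP amin[of b] by auto
    then have "a \<le> b" unfolding a_def by (rule Least_le)
    then show False using that by simp
  qed
  have a1: "1 \<le> a" "a \<le> ?N" using aP by auto
  define d where "d = ?N - a"
  have dlt: "d < ?N" using a1 unfolding d_def by auto
  have shx: "sh ?N d x = (if a < x then x - a else x + ?N - a)" if "x \<in> set w" for x
    unfolding d_def using sh_explicit[of x ?N a] that st a1 by auto
  have Gtot: "G a + length (filter (\<lambda>x. a < x) w) = n"
  proof -
    have "length (filter (\<lambda>x. x \<le> a) w) + length (filter (\<lambda>x. \<not> x \<le> a) w) = n"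
      using sum_length_filter_compl len by metis
    then show ?thesis unfolding G_def by (simp add: not_le)
  qed
  have stq: "set (map (sh ?N d) w) \<subseteq> {1..Suc n}" using sh_range[of ?N] by auto
  have "parking_function n (map (sh ?N d) w)"
  proof (subst pf_count)
    show "length (map (sh ?N d) w) = n" using len by simp
    show "set (map (sh ?N d) w) \<subseteq> {1..Suc n}" by (rule stq)
    show "\<forall>i\<in>{1..n}. i \<le> length (filter (\<lambda>x. x \<le> i) (map (sh ?N d) w))"
    proof
      fix i assume i: "i \<in> {1..n}"
      have e0: "length (filter (\<lambda>x. x \<le> i) (map (sh ?N d) w)) = length (filter (\<lambda>x. sh ?N d x \<le> i) w)"
        by (simp add: length_filter_map comp_def)
      show "i \<le> length (filter (\<lambda>x. x \<le> i) (map (sh ?N d) w))"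
      proof (cases "a + i \<le> ?N")
        case True
        have "filter (\<lambda>x. sh ?N d x \<le> i) w = filter (\<lambda>x. a < x \<and> x \<le> a + i) w"
          using shx st True by (intro filter_cong refl) auto
        moreover have "G (a + i) = G a + length (filter (\<lambda>x. a < x \<and> x \<le> a + i) w)"
        proof -
          have "filter (\<lambda>x. x \<le> a + i) w = filter (\<lambda>x. x \<le> a \<or> (a < x \<and> x \<le> a + i)) w"
            by (intro filter_cong refl) auto
          then show ?thesis unfolding G_def by (simp add: filt_or)
        qed
        moreover have "g a \<le> g (a + i)" using amin True i by auto
        ultimately show ?thesis using e0 unfolding g_def by simp
      next
        case False
        define b where "b = a + i - ?N"
        have b: "1 \<le> b" "b < a" using False i unfolding b_def by auto
        have "filter (\<lambda>x. sh ?N d x \<le> i) w = filter (\<lambda>x. a < x \<or> x \<le> b) w"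
          using shx st False a1 unfolding b_def by (intro filter_cong refl) auto
        then have "length (filter (\<lambda>x. sh ?N d x \<le> i) w) = length (filter (\<lambda>x. a < x) w) + G b"
          unfolding G_def using b by (simp add: filt_or)
        moreover have "g a < g b" using astrict b by auto
        ultimately show ?thesis using e0 Gtot False unfolding g_def b_def by simp
      qed
    qed
  qed
  then show ?thesis using dlt by blast
qed

lemma mset_map_cong: "mset xs = mset ys \<Longrightarrow> mset (map f xs) = mset (map f ys)"
  by (simp add: mset_map)

lemma sh_sh_mod: "1 \<le> x \<Longrightarrow> sh N a (sh N b x) = sh N ((a + b) mod N) x"
  by (metis sh_sh sh_mod)

lemma mod_zero_eq:
  fixes i j N :: nat
  assumes "i < N" "j < N" "(N - i + j) mod N = 0"
  shows "j = i"
proof (cases "j < i")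
  case True
  then have "N - i + j < N \<and> 0 < N - i + j" using assms by arith
  then show ?thesis using assms(3) by (metis mod_less neq0_conv)
next
  case False
  then have e: "N - i + j = (j - i) + N" using assms by auto
  have "j - i < N" using assms by auto
  then have "(N - i + j) mod N = j - i" unfolding e by simp
  then show ?thesis using assms(3) False by simp
qed

theorem theorem3p3:
  fixes n :: nat
  assumes "n \<ge> 1"
  shows "real (card (PF_321 n)) = real (card (words_321 n (n + 1))) / real (n + 1)"
proof -
  let ?N = "Suc n"
  let ?W = "words_321 n ?N"
  let ?P = "PF_321 n"
  let ?r = "R n"
  define F where "F = (\<lambda>(p, j). (?r ^^ j) p)"
  have n0: "0 < n" using assms by simp
  have finW: "finite ?W"
    by (rule finite_subset[of _ "{xs. set xs \<subseteq> {1..?N} \<and> length xs = n}"])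
       (auto simp: words_321_def intro: finite_lists_length_eq)
  have rW: "?r ` ?W \<subseteq> ?W" using R_W[of n ?N] by auto
  have rinj: "inj_on ?r ?W" using R_inj[of n ?N] by simp
  have rimg: "?r ` ?W = ?W" using endo_inj_surj[OF finW rW rinj] .
  have pimg: "(?r ^^ j) ` ?W = ?W" for j
  proof (induction j)
    case 0 then show ?case by simp
  next
    case (Suc j)
    have "(?r ^^ Suc j) ` ?W = ?r ` ((?r ^^ j) ` ?W)" by (simp add: image_comp)
    then show ?case using Suc rimg by simp
  qed
  have pinj: "inj_on (?r ^^ j) ?W" for j
  proof (induction j)
    case 0 then show ?case by simp
  next
    case (Suc j)
    have "inj_on (?r \<circ> (?r ^^ j)) ?W" by (rule comp_inj_on[OF Suc]) (simp add: pimg rinj)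
    then show ?case by (simp add: comp_def)
  qed
  have PW: "?P \<subseteq> ?W"
    by (auto simp: PF_321_def parking_function_def words_321_def)
  have inP: "p \<in> ?P \<longleftrightarrow> p \<in> ?W \<and> parking_function n p" for p
    using PW by (auto simp: PF_321_def words_321_def)
  have bij: "bij_betw F (?P \<times> {..<?N}) ?W"
    unfolding bij_betw_def
  proof
    show "inj_on F (?P \<times> {..<?N})"
    proof (rule inj_onI)
      fix x y assume x: "x \<in> ?P \<times> {..<?N}" and y: "y \<in> ?P \<times> {..<?N}" and e: "F x = F y"
      obtain p j where xpj: "x = (p, j)" by (cases x)
      obtain q i where yqi: "y = (q, i)" by (cases y)
      have pP: "p \<in> ?P" and j: "j < ?N" using x xpj by auto
      have qP: "q \<in> ?P" and i: "i < ?N" using y yqi by auto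
      have pW: "p \<in> ?W" and qW: "q \<in> ?W" using pP qP PW by auto
      have stp: "set p \<subseteq> {1..?N}" and stq: "set q \<subseteq> {1..?N}" using pW qW by (auto simp: words_321_def)
      have e': "(?r ^^ j) p = (?r ^^ i) q" using e xpj yqi by (simp add: F_def)
      have m: "mset (map (sh ?N j) p) = mset (map (sh ?N i) q)"
        using rho_mset[OF n0 pW, of j] rho_mset[OF n0 qW, of i] e' by simp
      have m2: "mset (map (sh ?N (?N - i)) (map (sh ?N j) p)) = mset (map (sh ?N (?N - i)) (map (sh ?N i) q))"
        using mset_map_cong[OF m] .
      define d where "d = (?N - i + j) mod ?N"
      have l1: "map (sh ?N (?N - i)) (map (sh ?N j) p) = map (sh ?N d) p"
        unfolding d_def using stp by (auto simp: sh_sh_mod)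
      have l2: "map (sh ?N (?N - i)) (map (sh ?N i) q) = q"
      proof -
        have "map (sh ?N (?N - i)) (map (sh ?N i) q) = map (sh ?N ((?N - i + i) mod ?N)) q"
          using stq by (auto simp: sh_sh_mod)
        also have "(?N - i + i) mod ?N = 0" using i by simp
        also have "map (sh ?N 0) q = q" using stq by (intro map_idI) (auto simp: sh_0)
        finally show ?thesis .
      qed
      have "mset (map (sh ?N d) p) = mset q" using m2 by (simp only: l1 l2)
      then have "parking_function n (map (sh ?N d) p) \<longleftrightarrow> parking_function n q" by (rule pf_mset)
      moreover have "parking_function n q" using qP by (simp add: PF_321_def)
      ultimately have pfd: "parking_function n (map (sh ?N d) p)" by simp
      have pfp: "parking_function n p" using pP by (simp add: PF_321_def)
      have "d = 0"
      proof (rule ccontr)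
        assume "d \<noteq> 0"
        moreover have "d < ?N" unfolding d_def by simp
        ultimately show False using pf_shift_unique[OF pfp pfd] by simp
      qed
      then have "j = i" using mod_zero_eq[OF i j] unfolding d_def by simp
      then have "p = q" using e' pinj[of j] pW qW by (auto dest: inj_onD)
      then show "x = y" using xpj yqi \<open>j = i\<close> by simp
    qed
  next
    show "F ` (?P \<times> {..<?N}) = ?W"
    proof
      show "F ` (?P \<times> {..<?N}) \<subseteq> ?W"
      proof
        fix w assume "w \<in> F ` (?P \<times> {..<?N})"
        then obtain p j where pP: "p \<in> ?P" and w: "w = (?r ^^ j) p" by (auto simp: F_def)
        have "p \<in> ?W" using pP PW by auto
        then show "w \<in> ?W" using w pimg[of j] by blast
      qed
    next
      show "?W \<subseteq> F ` (?P \<times> {..<?N})"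
      proof
        fix w assume wW: "w \<in> ?W"
        have lw: "length w = n" and stw: "set w \<subseteq> {1..?N}" using wW by (auto simp: words_321_def)
        obtain d where d: "d < ?N" and pfd: "parking_function n (map (sh ?N d) w)"
          using pf_shift_exists[OF lw stw] by blast
        define j where "j = (?N - d) mod ?N"
        have j: "j < ?N" unfolding j_def by simp
        have "w \<in> (?r ^^ j) ` ?W" using pimg[of j] wW by simp
        then obtain p where pW: "p \<in> ?W" and w: "w = (?r ^^ j) p" by auto
        have stp: "set p \<subseteq> {1..?N}" using pW by (auto simp: words_321_def)
        have "mset w = mset (map (sh ?N j) p)" using rho_mset[OF n0 pW, of j] w by simp
        then have "mset (map (sh ?N d) w) = mset (map (sh ?N d) (map (sh ?N j) p))" by (rule mset_map_cong)
        also have "map (sh ?N d) (map (sh ?N j) p) = map (sh ?N ((d + j) mod ?N)) p"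
          using stp by (auto simp: sh_sh_mod)
        also have "(d + j) mod ?N = 0"
        proof (cases "d = 0")
          case True then show ?thesis unfolding j_def by simp
        next
          case False
          then have "j = ?N - d" unfolding j_def using d by simp
          then show ?thesis using d by simp
        qed
        also have "map (sh ?N 0) p = p" using stp by (intro map_idI) (auto simp: sh_0)
        finally have "mset (map (sh ?N d) w) = mset p" .
        then have "parking_function n (map (sh ?N d) w) \<longleftrightarrow> parking_function n p" by (rule pf_mset)
        then have "parking_function n p" using pfd by simp
        then have "p \<in> ?P" using pW inP by blast
        then show "w \<in> F ` (?P \<times> {..<?N})" using j w unfolding F_def by force
      qed
    qed
  qed
  then have "card (?P \<times> {..<?N}) = card ?W" by (rule bij_betw_same_card)
  then have "card ?W = card ?P * ?N" by (simp add: card_cartesian_product)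
  then have eqr: "real (card ?W) = real (card ?P) * (1 + real n)" by (simp add: algebra_simps)
  have ne: "1 + real n \<noteq> 0" by simp
  have "real (card (words_321 n (n + 1))) / real (n + 1) = real (card ?P)"
    using eqr ne by simp
  then show ?thesis by simp
qed

end
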